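(* For each integer $i\geq1$, $\mathrm{Aut}_i(H)$ is a normal subgroup of $\mathrm{Aut}_*(H)$, and for $1\le i\le j$ let $\pi_i^j:\mathrm{Aut}_*(H)/\mathrm{Aut}_j(H)\to\mathrm{Aut}_*(H)/\mathrm{Aut}_i(H)$ be the canonical epimorphism. Then $\{\mathrm{Aut}_*(H)/\mathrm{Aut}_i(H),\pi_i^j\}$ is an inverse system of groups indexed by the positive integers, and the map $\mathrm{Aut}_*(H)\to\varprojlim\mathrm{Aut}_*(H)/\mathrm{Aut}_i(H)$, $\phi\mapsto(\phi\,\mathrm{Aut}_i(H))_{i\geq1}$, is a group isomorphism.
   Context: Let $k$ be a field and $0\neq q\in k$ not a root of unity. Let $H=k_q[x,x^{-1},y]$ be the $k$-algebra generated by $x,x^{-1},y$ subject to $xx^{-1}=x^{-1}x=1$, $yx=qxy$, a Hopf algebra with $\Delta(x)=x\otimes x$, $\Delta(x^{-1})=x^{-1}\otimes x^{-1}$, $\Delta(y)=y\otimes x+1\otimes y$, $\varepsilon(x)=1$, $\varepsilon(y)=0$. The elements $x^ny^m$ ($n\in\mathbb{Z}$, $m\in\mathbb{N}$) form a $k$-basis, and $\Delta(x^ny^m)=\sum_{i=0}^m\binom{m}{i}_q x^ny^i\otimes x^{n+i}y^{m-i}$ ($q$-binomial coefficients). Let $H_0=\mathrm{span}\{x^n:n\in\mathbb{Z}\}$ and $H(m)=H_0y^m$. $\mathrm{Aut}_c(H)$ is the group under composition of coalgebra automorphisms of $H$; $\mathrm{Aut}_0(H)=\{\phi\in\mathrm{Aut}_c(H):\phi(1)=1\}$;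 $\mathrm{Aut}_*(H)$ is the set of $\phi\in\mathrm{Aut}_0(H)$ such that for each $n\in\mathbb{Z}$ there is $\beta_n\in k$ with $\phi(x^ny)=x^ny+\beta_n(x^{n+1}-x^n)$; for $m\geq1$, $\mathrm{Aut}_m(H)=\{\phi\in\mathrm{Aut}_c(H):\phi(h)=h\ \text{for all }h\in\sum_{i=0}^mH(i)\}$. *)

theory Defs
  imports "HOL-Library.Poly_Mapping" "HOL-Algebra.Algebra"
begin

section \<open>The quantum plane Hopf algebra H = k_q[x,x^-1,y] as a coalgebra\<close>

text \<open>An element of H is a finitely supported function on the basis
  x^n y^m, indexed by the pair (n,m) with n integer, m natural.
  Elements of H tensor H are finitely supported functions on pairs of basis indices.\<close>

type_synonym 'k qH = "(int \<times> nat) \<Rightarrow>\<^sub>0 'k"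
type_synonym 'k qHH = "((int \<times> nat) \<times> (int \<times> nat)) \<Rightarrow>\<^sub>0 'k"

definition smult :: "'k::field \<Rightarrow> ('a \<Rightarrow>\<^sub>0 'k) \<Rightarrow> ('a \<Rightarrow>\<^sub>0 'k)" where
  "smult c p = Poly_Mapping.map (\<lambda>v. c * v) p"

definition xy :: "int \<Rightarrow> nat \<Rightarrow> 'k::field qH" where
  "xy n m = Poly_Mapping.single (n, m) 1"

definition lin_ext :: "('a \<Rightarrow> ('b \<Rightarrow>\<^sub>0 'k::field)) \<Rightarrow> ('a \<Rightarrow>\<^sub>0 'k) \<Rightarrow> ('b \<Rightarrow>\<^sub>0 'k)" where
  "lin_ext f p = (\<Sum>a\<in>Poly_Mapping.keys p. smult (Poly_Mapping.lookup p a) (f a))"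

fun qbinom :: "'k::field \<Rightarrow> nat \<Rightarrow> nat \<Rightarrow> 'k" where
  "qbinom q m 0 = 1"
| "qbinom q 0 (Suc i) = 0"
| "qbinom q (Suc m) (Suc i) = qbinom q m i + q ^ Suc i * qbinom q m (Suc i)"

definition comult :: "'k::field \<Rightarrow> 'k qH \<Rightarrow> 'k qHH" where
  "comult q = lin_ext (\<lambda>(n, m). \<Sum>i\<le>m.
      smult (qbinom q m i) (Poly_Mapping.single ((n, i), (n + int i, m - i)) 1))"

definition counit :: "'k::field qH \<Rightarrow> 'k" where
  "counit p = (\<Sum>a\<in>Poly_Mapping.keys p. Poly_Mapping.lookup p a * (if snd a = 0 then 1 else 0))"

definition tens :: "'k::field qH \<Rightarrow> 'k qH \<Rightarrow> 'k qHH" where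
  "tens u v = (\<Sum>a\<in>Poly_Mapping.keys u. \<Sum>b\<in>Poly_Mapping.keys v. Poly_Mapping.single (a, b) (Poly_Mapping.lookup u a * Poly_Mapping.lookup v b))"

definition tmap :: "('k::field qH \<Rightarrow> 'k qH) \<Rightarrow> ('k qH \<Rightarrow> 'k qH) \<Rightarrow> 'k qHH \<Rightarrow> 'k qHH" where
  "tmap f g = lin_ext (\<lambda>(a, b). tens (f (Poly_Mapping.single a 1)) (g (Poly_Mapping.single b 1)))"

definition k_linear :: "('k::field qH \<Rightarrow> 'k qH) \<Rightarrow> bool" where
  "k_linear f \<longleftrightarrow> (\<forall>u v. f (u + v) = f u + f v) \<and> (\<forall>c u. f (smult c u) = smult c (f u))"

definition coalg_map :: "'k::field \<Rightarrow> ('k qH \<Rightarrow> 'k qH) \<Rightarrow> bool" where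
  "coalg_map q f \<longleftrightarrow> k_linear f \<and> (\<forall>h. comult q (f h) = tmap f f (comult q h))
       \<and> (\<forall>h. counit (f h) = counit h)"

definition Aut_c :: "'k::field \<Rightarrow> ('k qH \<Rightarrow> 'k qH) set" where
  "Aut_c q = {f. coalg_map q f \<and> bij f}"

definition Aut_0 :: "'k::field \<Rightarrow> ('k qH \<Rightarrow> 'k qH) set" where
  "Aut_0 q = {f \<in> Aut_c q. f (xy 0 0) = xy 0 0}"

definition Aut_star :: "'k::field \<Rightarrow> ('k qH \<Rightarrow> 'k qH) set" where
  "Aut_star q = {f \<in> Aut_0 q. \<forall>n::int. \<exists>\<beta>::'k.
      f (xy n 1) = xy n 1 + smult \<beta> (xy (n + 1) 0 - xy n 0)}"

definition Hdeg :: "nat \<Rightarrow> 'k::field qH set" where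
  "Hdeg i = {p. \<forall>a\<in>Poly_Mapping.keys p. snd a = i}"

definition Hsum :: "nat \<Rightarrow> 'k::field qH set" where
  "Hsum m = {(\<Sum>i\<le>m. h i) | h. \<forall>i\<le>m. h i \<in> Hdeg i}"

definition Aut_m :: "'k::field \<Rightarrow> nat \<Rightarrow> ('k qH \<Rightarrow> 'k qH) set" where
  "Aut_m q m = {f \<in> Aut_c q. \<forall>h\<in>Hsum m. f h = h}"

definition comp_grp :: "('k qH \<Rightarrow> 'k qH) set \<Rightarrow> ('k qH \<Rightarrow> 'k qH) monoid" where
  "comp_grp S = \<lparr>carrier = S, monoid.mult = (\<circ>), one = id\<rparr>"

text \<open>canonical map G/M -> G/N, gM |-> gN (for M contained in N)\<close>
definition canon_proj :: "('a, 'b) monoid_scheme \<Rightarrow> 'a set \<Rightarrow> 'a set \<Rightarrow> 'a set" where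
  "canon_proj G N C = (\<Union>g\<in>C. g <#\<^bsub>G\<^esub> N)"

definition inverse_system ::
  "nat set \<Rightarrow> (nat \<Rightarrow> ('a, 'b) monoid_scheme) \<Rightarrow> (nat \<Rightarrow> nat \<Rightarrow> 'a \<Rightarrow> 'a) \<Rightarrow> bool" where
  "inverse_system I G p \<longleftrightarrow>
     (\<forall>i\<in>I. group (G i))
   \<and> (\<forall>i\<in>I. \<forall>j\<in>I. i \<le> j \<longrightarrow> p i j \<in> hom (G j) (G i))
   \<and> (\<forall>i\<in>I. \<forall>x\<in>carrier (G i). p i i x = x)
   \<and> (\<forall>i\<in>I. \<forall>j\<in>I. \<forall>k\<in>I. i \<le> j \<and> j \<le> k \<longrightarrow>
        (\<forall>x\<in>carrier (G k). p i j (p j k x) = p i k x))"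

definition inverse_limit ::
  "nat set \<Rightarrow> (nat \<Rightarrow> ('a, 'b) monoid_scheme) \<Rightarrow> (nat \<Rightarrow> nat \<Rightarrow> 'a \<Rightarrow> 'a) \<Rightarrow> (nat \<Rightarrow> 'a) monoid" where
  "inverse_limit I G p =
     \<lparr>carrier = {c \<in> (\<Pi>\<^sub>E i\<in>I. carrier (G i)). \<forall>i\<in>I. \<forall>j\<in>I. i \<le> j \<longrightarrow> p i j (c j) = c i},
      monoid.mult = (\<lambda>c d. \<lambda>i\<in>I. c i \<otimes>\<^bsub>G i\<^esub> d i),
      one = (\<lambda>i\<in>I. \<one>\<^bsub>G i\<^esub>)\<rparr>"

end

theory Submission
  imports Defs
begin


abbreviation lk where "lk \<equiv> Poly_Mapping.lookup"
abbreviation ks where "ks \<equiv> Poly_Mapping.keys"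


lemma lookup_smult[simp]: "lk (smult c p) k = c * lk p k"
  by (simp add: smult_def map.rep_eq when_def)

lemma keys_smult: "ks (smult c p) \<subseteq> ks p"
  by (auto simp: in_keys_iff)

lemma smult_single: "smult c (Poly_Mapping.single a (1::'k::field)) = Poly_Mapping.single a c"
  by (rule poly_mapping_eqI) (simp add: lookup_single when_def)

lemma lookup_lin_ext_gen:
  assumes "finite S" "ks p \<subseteq> S"
  shows "lk (lin_ext f p) k = (\<Sum>a\<in>S. lk p a * lk (f a) k)"
proof -
  have "lk (lin_ext f p) k = (\<Sum>a\<in>ks p. lk p a * lk (f a) k)"
    by (simp add: lin_ext_def lookup_sum)
  also have "\<dots> = (\<Sum>a\<in>S. lk p a * lk (f a) k)"
    using assms by (intro sum.mono_neutral_left) (auto simp: in_keys_iff)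
  finally show ?thesis .
qed

lemma lookup_lin_ext: "lk (lin_ext f p) k = (\<Sum>a\<in>ks p. lk p a * lk (f a) k)"
  by (rule lookup_lin_ext_gen) auto

lemma lin_ext_add: "lin_ext f (p + r) = lin_ext f p + lin_ext f r"
proof (rule poly_mapping_eqI)
  fix k
  let ?S = "ks p \<union> ks r"
  have S: "finite ?S" "ks (p+r) \<subseteq> ?S" "ks p \<subseteq> ?S" "ks r \<subseteq> ?S"
    using keys_add[of p r] by auto
  have "lk (lin_ext f (p + r)) k = (\<Sum>a\<in>?S. lk (p+r) a * lk (f a) k)"
    using S(1,2) by (rule lookup_lin_ext_gen)
  also have "\<dots> = (\<Sum>a\<in>?S. lk p a * lk (f a) k) + (\<Sum>a\<in>?S. lk r a * lk (f a) k)"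
    by (simp add: lookup_add distrib_right sum.distrib)
  also have "\<dots> = lk (lin_ext f p) k + lk (lin_ext f r) k"
    by (simp only: lookup_lin_ext_gen[OF S(1) S(3), of f k] lookup_lin_ext_gen[OF S(1) S(4), of f k])
  finally show "lk (lin_ext f (p + r)) k = lk (lin_ext f p + lin_ext f r) k"
    by (simp add: lookup_add)
qed

lemma lin_ext_smult: "lin_ext f (smult c p) = smult c (lin_ext f p)"
proof (rule poly_mapping_eqI)
  fix k
  have S: "ks (smult c p) \<subseteq> ks p" by (rule keys_smult)
  have "lk (lin_ext f (smult c p)) k = (\<Sum>a\<in>ks p. lk (smult c p) a * lk (f a) k)"
    using S by (intro lookup_lin_ext_gen) auto
  also have "\<dots> = c * (\<Sum>a\<in>ks p. lk p a * lk (f a) k)"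
    by (simp add: sum_distrib_left mult.assoc)
  finally show "lk (lin_ext f (smult c p)) k = lk (smult c (lin_ext f p)) k"
    by (simp add: lookup_lin_ext)
qed

lemma lin_ext_zero: "lin_ext f 0 = 0"
  by (simp add: lin_ext_def)

lemma lin_ext_single: "lin_ext f (Poly_Mapping.single a (1::'k::field)) = f a"
  by (rule poly_mapping_eqI) (simp add: lookup_lin_ext)

lemma lin_ext_sum: "finite S \<Longrightarrow> lin_ext f (\<Sum>x\<in>S. g x) = (\<Sum>x\<in>S. lin_ext f (g x))"
  by (induction S rule: finite_induct) (auto simp: lin_ext_zero lin_ext_add)

lemma lin_ext_minus: "lin_ext f (p - r) = lin_ext f p - lin_ext f r"
proof -
  have "lin_ext f (p - r) + lin_ext f r = lin_ext f p" by (simp flip: lin_ext_add)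
  thus ?thesis by (simp add: eq_diff_eq)
qed

lemma keys_lin_ext: "ks (lin_ext f p) \<subseteq> (\<Union>a\<in>ks p. ks (f a))"
proof
  fix k assume "k \<in> ks (lin_ext f p)"
  hence "(\<Sum>a\<in>ks p. lk p a * lk (f a) k) \<noteq> 0"
    by (simp add: in_keys_iff lookup_lin_ext)
  hence "\<exists>a\<in>ks p. lk p a * lk (f a) k \<noteq> 0"
    by (rule contrapos_np) (rule sum.neutral, blast)
  then obtain a where "a \<in> ks p" "lk (f a) k \<noteq> 0" by auto
  thus "k \<in> (\<Union>a\<in>ks p. ks (f a))" by (auto simp: in_keys_iff)
qed

lemma pm_expand: "p = (\<Sum>a\<in>ks p. Poly_Mapping.single a (lk p a))"
proof (rule poly_mapping_eqI)
  fix k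
  show "lk p k = lk (\<Sum>a\<in>ks p. Poly_Mapping.single a (lk p a)) k"
    by (simp add: lookup_sum lookup_single when_def in_keys_iff)
qed

lemma linear_zero: "k_linear f \<Longrightarrow> f 0 = 0"
proof -
  assume "k_linear f"
  hence "f (0 + 0) = f 0 + f 0" unfolding k_linear_def by blast
  thus ?thesis by simp
qed

lemma linear_sum: assumes "k_linear f" "finite S" shows "f (\<Sum>x\<in>S. g x) = (\<Sum>x\<in>S. f (g x))"
  using assms(2) by (induction S rule: finite_induct) (use assms(1) in \<open>auto simp: linear_zero k_linear_def\<close>)

lemma linear_lin_ext: "k_linear f \<Longrightarrow> f p = lin_ext (\<lambda>a. f (Poly_Mapping.single a 1)) p"
proof -
  assume L: "k_linear f"
  have "f p = f (\<Sum>a\<in>ks p. smult (lk p a) (Poly_Mapping.single a 1))"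
    by (subst pm_expand[of p]) (simp add: smult_single)
  also have "\<dots> = (\<Sum>a\<in>ks p. smult (lk p a) (f (Poly_Mapping.single a 1)))"
    using L by (simp add: linear_sum k_linear_def)
  finally show ?thesis by (simp add: lin_ext_def)
qed

lemma linear_minus: assumes "k_linear f" shows "f (u - v) = f u - f v"
proof -
  have "f (u - v) + f v = f u" using assms unfolding k_linear_def by (metis diff_add_cancel)
  thus ?thesis by (simp add: eq_diff_eq)
qed



lemma sum_when_eq: "finite S \<Longrightarrow> (\<Sum>x\<in>S. (g x when x = a)) = (if a \<in> S then g a else 0)"
  by (simp add: when_def sum.delta')

lemma lookup_tens: "lk (tens u v) (a, b) = lk u a * lk v b"
proof -
  have "lk (tens u v) (a, b) = (\<Sum>a'\<in>ks u. \<Sum>b'\<in>ks v. (lk u a' * lk v b' when (a', b') = (a, b)))"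
    by (simp add: tens_def lookup_sum lookup_single)
  also have "\<dots> = (\<Sum>a'\<in>ks u. (\<Sum>b'\<in>ks v. ((lk u a' * lk v b' when b' = b)) when a' = a))"
    by (intro sum.cong refl) (auto simp: when_def)
  also have "\<dots> = (\<Sum>a'\<in>ks u. ((\<Sum>b'\<in>ks v. (lk u a' * lk v b' when b' = b)) when a' = a))"
    by (intro sum.cong refl) (auto simp: when_def)
  also have "\<dots> = lk u a * lk v b"
    by (simp add: sum_when_eq in_keys_iff)
  finally show ?thesis .
qed

lemma keys_tens: "ks (tens u v) \<subseteq> ks u \<times> ks v"
  by (auto simp: in_keys_iff lookup_tens)

lemma in_keys_tens: "(a, b) \<in> ks (tens u v) \<longleftrightarrow> a \<in> ks u \<and> b \<in> ks v"
  by (auto simp: in_keys_iff lookup_tens)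

lemma tens_single: "tens (Poly_Mapping.single a 1) (Poly_Mapping.single b (1::'k::field)) = Poly_Mapping.single (a, b) 1"
  by (rule poly_mapping_eqI) (auto simp: lookup_tens lookup_single when_def split: if_splits)

lemma tmap_tens:
  assumes f: "k_linear f" and g: "k_linear g"
  shows "tmap f g (tens u v) = tens (f u) (g v)"
proof (rule poly_mapping_eqI)
  fix k :: "(int \<times> nat) \<times> (int \<times> nat)"
  obtain c d where k: "k = (c, d)" by (cases k)
  have "lk (tmap f g (tens u v)) (c, d) =
     (\<Sum>x\<in>ks u \<times> ks v. lk (tens u v) x * lk ((\<lambda>(a, b). tens (f (Poly_Mapping.single a 1)) (g (Poly_Mapping.single b 1))) x) (c, d))"
    unfolding tmap_def by (rule lookup_lin_ext_gen) (simp_all add: keys_tens)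
  also have "\<dots> = (\<Sum>a\<in>ks u. \<Sum>b\<in>ks v. (lk u a * lk (f (Poly_Mapping.single a 1)) c) * (lk v b * lk (g (Poly_Mapping.single b 1)) d))"
    unfolding sum.cartesian_product by (intro sum.cong refl) (auto simp: lookup_tens mult_ac)
  also have "\<dots> = (\<Sum>a\<in>ks u. lk u a * lk (f (Poly_Mapping.single a 1)) c) * (\<Sum>b\<in>ks v. lk v b * lk (g (Poly_Mapping.single b 1)) d)"
    by (simp add: sum_product)
  also have "\<dots> = lk (f u) c * lk (g v) d"
    using linear_lin_ext[OF f, of u] linear_lin_ext[OF g, of v] by (simp add: lookup_lin_ext)
  finally show "lk (tmap f g (tens u v)) k = lk (tens (f u) (g v)) k"
    by (simp add: k lookup_tens)
qed

lemma tmap_id: "tmap id id P = P"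
proof (rule poly_mapping_eqI)
  fix k
  have "lk (tmap id id P) k = (\<Sum>x\<in>ks P. lk P x * lk (Poly_Mapping.single x 1) k)"
    unfolding tmap_def lookup_lin_ext by (intro sum.cong refl) (auto simp: tens_single)
  also have "\<dots> = (\<Sum>x\<in>ks P. if x = k then lk P x else 0)"
    by (intro sum.cong refl) (auto simp: lookup_single when_def)
  also have "\<dots> = lk P k"
    by (simp add: sum.delta in_keys_iff)
  finally show "lk (tmap id id P) k = lk P k" .
qed

lemma tmap_comp:
  assumes f: "k_linear f"
  shows "tmap f f (tmap g g P) = tmap (f \<circ> g) (f \<circ> g) P"
proof -
  have "tmap f f (tmap g g P) = (\<Sum>x\<in>ks P. smult (lk P x) (tmap f f ((\<lambda>(a, b). tens (g (Poly_Mapping.single a 1)) (g (Poly_Mapping.single b 1))) x)))"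
    unfolding tmap_def[of g] lin_ext_def
    by (simp add: tmap_def[of f] lin_ext_sum lin_ext_smult)
  also have "\<dots> = tmap (f \<circ> g) (f \<circ> g) P"
    unfolding tmap_def[of "f \<circ> g"] lin_ext_def
    by (intro sum.cong refl) (auto simp: tmap_tens[OF f f])
  finally show ?thesis .
qed

lemma tmap_cong:
  assumes "\<And>a b. (a, b) \<in> ks P \<Longrightarrow> f (Poly_Mapping.single a 1) = g (Poly_Mapping.single a 1) \<and> f (Poly_Mapping.single b 1) = g (Poly_Mapping.single b 1)"
  shows "tmap f f P = tmap g g P"
  unfolding tmap_def lin_ext_def using assms by (intro sum.cong refl) auto

lemma keys_tmap: "ks (tmap f g P) \<subseteq> (\<Union>(a, b)\<in>ks P. ks (f (Poly_Mapping.single a 1)) \<times> ks (g (Poly_Mapping.single b 1)))"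
  unfolding tmap_def using keys_lin_ext keys_tens by fastforce



definition deg_le :: "nat \<Rightarrow> 'k::field qH \<Rightarrow> bool" where
  "deg_le m p \<longleftrightarrow> (\<forall>a\<in>ks p. snd a \<le> m)"

lemma Hsum_iff: "p \<in> Hsum m \<longleftrightarrow> deg_le m p"
proof
  assume "p \<in> Hsum m"
  then obtain h where p: "p = (\<Sum>i\<le>m. h i)" and h: "\<forall>i\<le>m. h i \<in> Hdeg i"
    unfolding Hsum_def by blast
  show "deg_le m p" unfolding deg_le_def
  proof
    fix a assume "a \<in> ks p"
    then obtain i where "i \<in> {..m}" "a \<in> ks (h i)" using keys_sum[of h "{..m}"] p by blast
    thus "snd a \<le> m" using h unfolding Hdeg_def by auto
  qed
next
  assume d: "deg_le m p"
  define h where "h i = (\<Sum>a\<in>{a\<in>ks p. snd a = i}. Poly_Mapping.single a (lk p a))" for i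
  have hd: "\<forall>i\<le>m. h i \<in> Hdeg i"
  proof (intro allI impI)
    fix i
    have "ks (h i) \<subseteq> (\<Union>a\<in>{a\<in>ks p. snd a = i}. ks (Poly_Mapping.single a (lk p a)))"
      unfolding h_def by (rule keys_sum)
    also have "\<dots> \<subseteq> {a. snd a = i}" by auto
    finally show "h i \<in> Hdeg i" unfolding Hdeg_def by blast
  qed
  have "(\<Sum>i\<le>m. h i) = (\<Sum>a\<in>ks p. Poly_Mapping.single a (lk p a))"
    unfolding h_def using d unfolding deg_le_def by (intro sum.group) auto
  also have "\<dots> = p" by (rule pm_expand[symmetric])
  finally show "p \<in> Hsum m" unfolding Hsum_def using hd by blast
qed

lemma deg_le_mono: "deg_le i p \<Longrightarrow> i \<le> j \<Longrightarrow> deg_le j p"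
  unfolding deg_le_def by auto

lemma comult_single: "comult q (Poly_Mapping.single (n, m) 1) = (\<Sum>i\<le>m. smult (qbinom q m i) (Poly_Mapping.single ((n, i), (n + int i, m - i)) 1))"
  unfolding comult_def by (simp add: lin_ext_single)

lemma comult_add: "comult q (u + v) = comult q u + comult q v"
  unfolding comult_def by (rule lin_ext_add)
lemma comult_smult: "comult q (smult c u) = smult c (comult q u)"
  unfolding comult_def by (rule lin_ext_smult)
lemma comult_minus: "comult q (u - v) = comult q u - comult q v"
  unfolding comult_def by (rule lin_ext_minus)

lemma keys_comult:
  assumes "k \<in> ks (comult q p)"
  shows "\<exists>a\<in>ks p. \<exists>i\<le>snd a. k = ((fst a, i), (fst a + int i, snd a - i))"
proof -
  have "k \<in> (\<Union>a\<in>ks p. ks ((\<lambda>(n, m). \<Sum>i\<le>m. smult (qbinom q m i) (Poly_Mapping.single ((n, i), (n + int i, m - i)) 1)) a))"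
    by (rule subsetD[OF keys_lin_ext assms[unfolded comult_def]])
  then obtain a where a: "a \<in> ks p"
    and k: "k \<in> ks ((\<lambda>(n, m). \<Sum>i\<le>m. smult (qbinom q m i) (Poly_Mapping.single ((n, i), (n + int i, m - i)) 1)) a)"
    by (rule UN_E)
  obtain n m where am: "a = (n, m)" by (cases a)
  have "k \<in> (\<Union>i\<in>{..m}. ks (smult (qbinom q m i) (Poly_Mapping.single ((n, i), (n + int i, m - i)) (1::'a))))"
    by (rule subsetD[OF keys_sum]) (use k in \<open>simp add: am\<close>)
  then obtain i where i0: "i \<in> {..m}" and i2: "k \<in> ks (smult (qbinom q m i) (Poly_Mapping.single ((n, i), (n + int i, m - i)) (1::'a)))"
    by (rule UN_E)
  have i1: "i \<le> m" using i0 by simp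
  have "k \<in> ks (Poly_Mapping.single ((n, i), (n + int i, m - i)) (1::'a))"
    by (rule subsetD[OF keys_smult i2])
  hence ke: "k = ((n, i), (n + int i, m - i))" by simp
  show ?thesis
  proof (rule bexI[of _ a])
    show "\<exists>i\<le>snd a. k = ((fst a, i), (fst a + int i, snd a - i))"
      using i1 ke by (intro exI[of _ i]) (simp add: am)
  qed (rule a)
qed

lemma qbinom_0[simp]: "qbinom q m 0 = 1"
  by (cases m) auto

lemma qbinom_Suc_1: "qbinom q (Suc m) 1 = 1 + q * qbinom q m 1"
  by simp

lemma qbinom_1: "(1 - q) * qbinom q (Suc m) 1 = 1 - q ^ Suc m"
proof (induction m)
  case 0 then show ?case by simp
next
  case (Suc m)
  have "qbinom q (Suc (Suc m)) 1 = 1 + q * qbinom q (Suc m) 1" by (rule qbinom_Suc_1)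
  hence "(1 - q) * qbinom q (Suc (Suc m)) 1 = (1 - q) + q * ((1 - q) * qbinom q (Suc m) 1)"
    by (simp add: algebra_simps del: qbinom.simps)
  also have "\<dots> = 1 - q ^ Suc (Suc m)" unfolding Suc.IH by (simp add: algebra_simps del: qbinom.simps)
  finally show ?case .
qed

lemma qbinom_1_nz: "q ^ j \<noteq> 1 \<Longrightarrow> j \<ge> 1 \<Longrightarrow> qbinom q j 1 \<noteq> 0"
  using qbinom_1[of q "j - 1"] by (cases j) auto

lemma lookup_comult_1:
  assumes j: "j \<ge> 2"
  shows "lk (comult q p) ((n, 1), (n + 1, j - 1)) = lk p (n, j) * qbinom q j 1"
proof -
  let ?k = "((n, 1), (n + 1, j - 1))"
  have tm: "qbinom q l i * ((1::'a) when ((n', i), (n' + int i, l - i)) = ?k)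
     = (if i = 1 then (if n' = n \<and> l = j then qbinom q l i else 0) else 0)"
    if "i \<le> l" for i l n'
  proof (cases "i = 1 \<and> n' = n \<and> l = j")
    case True thus ?thesis by (simp add: when_def)
  next
    case False
    have "((n', i), (n' + int i, l - i)) \<noteq> ?k"
    proof
      assume e: "((n', i), (n' + int i, l - i)) = ?k"
      hence "n' = n" "i = 1" "l - i = j - 1" by auto
      with that j False show False by simp
    qed
    thus ?thesis using False that j by (auto simp: when_def)
  qed
  have inner: "lk ((\<lambda>(n', l). \<Sum>i\<le>l. smult (qbinom q l i) (Poly_Mapping.single ((n', i), (n' + int i, l - i)) 1)) a) ?k
     = (if a = (n, j) then qbinom q j 1 else 0)" for a
  proof -
    obtain n' l where a: "a = (n', l)" by (cases a)
    have "lk ((\<lambda>(n', l). \<Sum>i\<le>l. smult (qbinom q l i) (Poly_Mapping.single ((n', i), (n' + int i, l - i)) 1)) a) ?k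
      = (\<Sum>i\<le>l. qbinom q l i * ((1::'a) when ((n', i), (n' + int i, l - i)) = ?k))"
      unfolding a by (simp add: lookup_sum lookup_single)
    also have "\<dots> = (\<Sum>i\<le>l. if i = 1 then (if n' = n \<and> l = j then qbinom q l i else 0) else 0)"
      by (rule sum.cong[OF refl]) (rule tm, simp)
    also have "\<dots> = (if 1 \<le> l then (if n' = n \<and> l = j then qbinom q l 1 else 0) else 0)"
      by (simp add: sum.delta)
    also have "\<dots> = (if a = (n, j) then qbinom q j 1 else 0)"
      using j by (auto simp: a)
    finally show ?thesis .
  qed
  have "lk (comult q p) ?k = (\<Sum>a\<in>ks p. lk p a * (if a = (n, j) then qbinom q j 1 else 0))"
    unfolding comult_def lookup_lin_ext inner ..
  also have "\<dots> = (\<Sum>a\<in>ks p. if a = (n, j) then lk p a * qbinom q j 1 else 0)"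
    by (rule sum.cong[OF refl]) simp
  also have "\<dots> = lk p (n, j) * qbinom q j 1"
    by (simp add: sum.delta in_keys_iff)
  finally show ?thesis .
qed


lemma grouplike_deg0:
  assumes "comult q g = tens g g"
  shows "deg_le 0 g"
proof (rule ccontr)
  assume nd: "\<not> deg_le 0 g"
  let ?J = "snd ` ks g"
  have fin: "finite ?J" by simp
  from nd obtain a0 where a0: "a0 \<in> ks g" "snd a0 > 0" unfolding deg_le_def by auto
  define j where "j = Max ?J"
  have jge: "snd a \<le> j" if "a \<in> ks g" for a using that fin unfolding j_def by simp
  have "j \<in> ?J" unfolding j_def using fin a0 by (intro Max_in) auto
  then obtain a1 where a1: "a1 \<in> ks g" "j = snd a1" by blast
  define n where "n = fst a1"
  have nj: "(n, j) \<in> ks g" using a1 unfolding n_def by simp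
  have jpos: "j > 0" using jge[OF a0(1)] a0(2) by simp
  have "((n, j), (n, j)) \<in> ks (comult q g)" using assms nj by (simp add: in_keys_tens)
  from keys_comult[OF this] obtain a where a1': "a \<in> ks g"
    and "\<exists>i\<le>snd a. ((n, j), (n, j)) = ((fst a, i), (fst a + int i, snd a - i))" by (rule bexE)
  then obtain i where ai': "i \<le> snd a" "((n, j), (n, j)) = ((fst a, i), (fst a + int i, snd a - i))" by blast
  note ai = a1' ai'
  from ai(3) have "i = j" "snd a - i = j" by simp_all
  hence "snd a = 2 * j" using ai(2) by simp
  with jge[OF ai(1)] jpos show False by simp
qed

lemma coalg_base:
  assumes cm: "coalg_map q f" and a: "snd a = 0"
  shows "deg_le 0 (f (Poly_Mapping.single a 1))"
proof -
  obtain n where an: "a = (n, 0)" using a by (cases a) auto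
  have "comult q (Poly_Mapping.single a 1) = Poly_Mapping.single (a, a) (1::'a)"
    by (simp add: an comult_single smult_single)
  hence "comult q (f (Poly_Mapping.single a 1)) = tens (f (Poly_Mapping.single a 1)) (f (Poly_Mapping.single a 1))"
    using cm unfolding coalg_map_def tmap_def by (simp add: lin_ext_single)
  thus ?thesis by (rule grouplike_deg0)
qed

lemma deg_le_lin_ext:
  assumes "\<And>a. a \<in> ks p \<Longrightarrow> deg_le m (F a)"
  shows "deg_le m (lin_ext F p)"
  unfolding deg_le_def
proof
  fix b assume "b \<in> ks (lin_ext F p)"
  hence "b \<in> (\<Union>a\<in>ks p. ks (F a))" by (rule subsetD[OF keys_lin_ext])
  then obtain a where "a \<in> ks p" "b \<in> ks (F a)" by (rule UN_E)
  thus "snd b \<le> m" using assms unfolding deg_le_def by blast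
qed

lemma coalg_deg0:
  assumes cm: "coalg_map q f" and d: "deg_le 0 p"
  shows "deg_le 0 (f p)"
proof -
  have L: "k_linear f" using cm by (simp add: coalg_map_def)
  have "deg_le 0 (lin_ext (\<lambda>a. f (Poly_Mapping.single a 1)) p)"
  proof (rule deg_le_lin_ext)
    fix a assume "a \<in> ks p"
    hence "snd a = 0" using d unfolding deg_le_def by simp
    thus "deg_le 0 (f (Poly_Mapping.single a 1))" by (rule coalg_base[OF cm])
  qed
  thus ?thesis using linear_lin_ext[OF L, of p] by simp
qed


lemma coalg_deg:
  assumes cm: "coalg_map q f" and q: "\<forall>n::nat. n > 0 \<longrightarrow> q ^ n \<noteq> 1"
  shows "deg_le m p \<Longrightarrow> deg_le m (f p)"
proof (induction m arbitrary: p)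
  case 0 thus ?case using coalg_deg0[OF cm] by blast
next
  case (Suc m)
  let ?e = "\<lambda>a. Poly_Mapping.single a (1::'a)"
  let ?R = "\<lambda>k::(int \<times> nat) \<times> (int \<times> nat). snd (fst k) = 0 \<or> snd (snd k) \<le> m"
  have R1: "?R k" if "k \<in> ks (comult q p)" for k
  proof -
    from keys_comult[OF that] obtain a where a: "a \<in> ks p"
      and "\<exists>i\<le>snd a. k = ((fst a, i), (fst a + int i, snd a - i))" by (rule bexE)
    then obtain i where i: "i \<le> snd a" "k = ((fst a, i), (fst a + int i, snd a - i))" by blast
    have "snd a \<le> Suc m" using Suc.prems a unfolding deg_le_def by blast
    thus ?thesis using i by auto
  qed
  have R2: "?R k" if "k \<in> ks (comult q (f p))" for k
  proof -
    have "k \<in> ks (tmap f f (comult q p))" using that cm by (simp add: coalg_map_def)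
    hence "k \<in> (\<Union>(a, b)\<in>ks (comult q p). ks (f (?e a)) \<times> ks (f (?e b)))"
      by (rule subsetD[OF keys_tmap])
    then obtain ab where ab0: "ab \<in> ks (comult q p)" and k: "k \<in> (case ab of (a, b) \<Rightarrow> ks (f (?e a)) \<times> ks (f (?e b)))"
      by (rule UN_E)
    obtain a b where abe: "ab = (a, b)" by (cases ab)
    have ab: "(a, b) \<in> ks (comult q p)" "fst k \<in> ks (f (?e a))" "snd k \<in> ks (f (?e b))"
      using ab0 k abe by auto
    from R1[OF ab(1)] have "snd a = 0 \<or> snd b \<le> m" by simp
    thus ?thesis
    proof
      assume "snd a = 0"
      hence "snd (fst k) \<le> 0" using coalg_base[OF cm] ab(2) unfolding deg_le_def by blast
      thus ?thesis by simp
    next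
      assume "snd b \<le> m"
      hence "deg_le m (?e b)" unfolding deg_le_def by simp
      hence "snd (snd k) \<le> m" using Suc.IH ab(3) unfolding deg_le_def by blast
      thus ?thesis by simp
    qed
  qed
  show ?case unfolding deg_le_def
  proof (rule ccontr)
    assume "\<not> (\<forall>a\<in>ks (f p). snd a \<le> Suc m)"
    then obtain a where a: "a \<in> ks (f p)" "snd a > Suc m" by auto
    obtain n j where aj: "a = (n, j)" by (cases a)
    have nj: "(n, j) \<in> ks (f p)" "j > Suc m" using a aj by auto
    have "lk (comult q (f p)) ((n, 1), (n + 1, j - 1)) = lk (f p) (n, j) * qbinom q j 1"
      using nj by (intro lookup_comult_1) auto
    also have "\<dots> \<noteq> 0"
    proof -
      have "q ^ j \<noteq> 1" using q nj by auto
      hence "qbinom q j 1 \<noteq> 0" using nj by (intro qbinom_1_nz) auto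
      thus ?thesis using nj by (simp add: in_keys_iff)
    qed
    finally have "((n, 1), (n + 1, j - 1)) \<in> ks (comult q (f p))" by (simp add: in_keys_iff)
    from R2[OF this] nj show False by simp
  qed
qed



abbreviation Inv :: "('a \<Rightarrow> 'b) \<Rightarrow> 'b \<Rightarrow> 'a" where "Inv f \<equiv> inv_into UNIV f"

lemma k_linear_id: "k_linear id"
  by (simp add: k_linear_def)

lemma coalg_id: "coalg_map q id"
  by (simp add: coalg_map_def k_linear_id tmap_id)

lemma k_linear_comp: "k_linear f \<Longrightarrow> k_linear g \<Longrightarrow> k_linear (f \<circ> g)"
  by (simp add: k_linear_def)

lemma coalg_comp:
  assumes f: "coalg_map q f" and g: "coalg_map q g"
  shows "coalg_map q (f \<circ> g)"
proof -
  have lf: "k_linear f" and lg: "k_linear g" using f g by (simp_all add: coalg_map_def)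
  have "comult q ((f \<circ> g) h) = tmap (f \<circ> g) (f \<circ> g) (comult q h)" for h
  proof -
    have "comult q ((f \<circ> g) h) = tmap f f (comult q (g h))" using f by (simp add: coalg_map_def)
    also have "\<dots> = tmap f f (tmap g g (comult q h))" using g by (simp add: coalg_map_def)
    also have "\<dots> = tmap (f \<circ> g) (f \<circ> g) (comult q h)" by (rule tmap_comp[OF lf])
    finally show ?thesis .
  qed
  moreover have "counit ((f \<circ> g) h) = counit h" for h using f g by (simp add: coalg_map_def)
  ultimately show ?thesis using k_linear_comp[OF lf lg] by (simp add: coalg_map_def)
qed

lemma linear_inv:
  assumes L: "k_linear f" and b: "bij f"
  shows "k_linear (Inv f)"
proof -
  have fi: "f (Inv f x) = x" for x using b by (simp add: bij_is_surj surj_f_inv_f)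
  have if': "Inv f (f x) = x" for x using b by (simp add: bij_is_inj inv_into_f_f)
  have "Inv f (u + v) = Inv f u + Inv f v" for u v
  proof -
    have "f (Inv f u + Inv f v) = u + v" using L fi by (simp add: k_linear_def)
    hence "Inv f (u + v) = Inv f (f (Inv f u + Inv f v))" by simp
    thus ?thesis by (simp add: if')
  qed
  moreover have "Inv f (smult c u) = smult c (Inv f u)" for c u
  proof -
    have "f (smult c (Inv f u)) = smult c u" using L fi by (simp add: k_linear_def)
    hence "Inv f (smult c u) = Inv f (f (smult c (Inv f u)))" by simp
    thus ?thesis by (simp add: if')
  qed
  ultimately show ?thesis by (simp add: k_linear_def)
qed

lemma coalg_inv:
  assumes f: "coalg_map q f" and b: "bij f"
  shows "coalg_map q (Inv f)"
proof -
  have lf: "k_linear f" using f by (simp add: coalg_map_def)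
  have li: "k_linear (Inv f)" by (rule linear_inv[OF lf b])
  have fi: "f (Inv f x) = x" for x using b by (simp add: bij_is_surj surj_f_inv_f)
  have io: "Inv f \<circ> f = id" using b by (simp add: bij_is_inj fun_eq_iff inv_into_f_f)
  have "comult q (Inv f h) = tmap (Inv f) (Inv f) (comult q h)" for h
  proof -
    have "comult q (Inv f h) = tmap id id (comult q (Inv f h))" by (simp add: tmap_id)
    also have "\<dots> = tmap (Inv f \<circ> f) (Inv f \<circ> f) (comult q (Inv f h))" by (simp add: io)
    also have "\<dots> = tmap (Inv f) (Inv f) (tmap f f (comult q (Inv f h)))" by (simp add: tmap_comp[OF li])
    also have "tmap f f (comult q (Inv f h)) = comult q (f (Inv f h))" using f by (simp add: coalg_map_def)
    also have "\<dots> = comult q h" by (simp add: fi)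
    finally show ?thesis .
  qed
  moreover have "counit (Inv f h) = counit h" for h
  proof -
    have "counit (f (Inv f h)) = counit (Inv f h)" using f by (simp add: coalg_map_def)
    thus ?thesis by (simp add: fi)
  qed
  ultimately show ?thesis using li by (simp add: coalg_map_def)
qed

lemma Autc_id: "id \<in> Aut_c q" by (simp add: Aut_c_def coalg_id)
lemma Autc_comp: "f \<in> Aut_c q \<Longrightarrow> g \<in> Aut_c q \<Longrightarrow> f \<circ> g \<in> Aut_c q"
  by (simp add: Aut_c_def coalg_comp bij_comp)
lemma Autc_inv: "f \<in> Aut_c q \<Longrightarrow> Inv f \<in> Aut_c q"
  by (simp add: Aut_c_def coalg_inv bij_imp_bij_inv)

lemma Autc_linear: "f \<in> Aut_c q \<Longrightarrow> k_linear f" by (simp add: Aut_c_def coalg_map_def)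

lemma smult_add_left: "smult a u + smult b u = smult (a + b) u"
  by (rule poly_mapping_eqI) (simp add: lookup_add distrib_right)

lemma lin_smult: "k_linear f \<Longrightarrow> f (smult c u) = smult c (f u)" by (simp add: k_linear_def)
lemma lin_add: "k_linear f \<Longrightarrow> f (u + v) = f u + f v" by (simp add: k_linear_def)

lemma tmap_add: "tmap f g (P + Q) = tmap f g P + tmap f g Q"
  unfolding tmap_def by (rule lin_ext_add)
lemma tmap_single: "tmap f g (Poly_Mapping.single (a, b) 1) = tens (f (Poly_Mapping.single a 1)) (g (Poly_Mapping.single b 1))"
  unfolding tmap_def by (simp add: lin_ext_single)

lemma comult_xy1: "comult q (xy m 1) = Poly_Mapping.single ((m, 0), (m, 1)) 1 + Poly_Mapping.single ((m, 1), (m + 1, 0)) 1"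
  unfolding xy_def comult_single by (simp add: smult_single numeral_2_eq_2)

lemma comult_xy0: "comult q (xy m 0) = Poly_Mapping.single ((m, 0), (m, 0)) 1"
  unfolding xy_def comult_single by (simp add: smult_single)

lemma star_fix:
  assumes fs: "f \<in> Aut_star q"
  shows "f (xy n 0) = xy n 0"
proof -
  define m where "m = n - 1"
  have nm: "n = m + 1" unfolding m_def by simp
  have fc: "f \<in> Aut_c q" using fs by (simp add: Aut_star_def Aut_0_def)
  hence cm: "coalg_map q f" and L: "k_linear f" by (simp_all add: Aut_c_def coalg_map_def)
  obtain \<beta> where u: "f (xy m 1) = xy m 1 + smult \<beta> (xy (m + 1) 0 - xy m 0)"
    using fs unfolding Aut_star_def by blast
  define u where "u = f (xy m 1)"
  define a where "a = f (xy (m + 1) 0)"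
  define b where "b = f (xy m 0)"
  have "comult q u = tmap f f (comult q (xy m 1))" using cm unfolding u_def coalg_map_def by blast
  also have "\<dots> = tens b u + tens u a"
    unfolding comult_xy1 tmap_add tmap_single unfolding a_def b_def u_def xy_def ..
  finally have c1: "comult q u = tens b u + tens u a" .
  have c2: "comult q u = Poly_Mapping.single ((m, 0), (m, 1)) 1 + Poly_Mapping.single ((m, 1), (m + 1, 0)) 1
     + smult \<beta> (Poly_Mapping.single ((m + 1, 0), (m + 1, 0)) 1 - Poly_Mapping.single ((m, 0), (m, 0)) 1)"
    unfolding u_def u comult_add comult_smult comult_minus comult_xy1 comult_xy0 ..
  have b0: "lk b (m, 1) = 0"
  proof -
    have "deg_le 0 b" unfolding b_def xy_def by (rule coalg_base[OF cm]) simp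
    show ?thesis
    proof (rule ccontr)
      assume "lk b (m, 1) \<noteq> 0"
      hence "(m, 1) \<in> ks b" by (simp add: in_keys_iff)
      with \<open>deg_le 0 b\<close> show False unfolding deg_le_def by fastforce
    qed
  qed
  have u1: "lk u (m, 1) = 1" unfolding u_def u unfolding xy_def
    by (simp add: lookup_add lookup_minus lookup_single)
  have "lk a k = lk (xy n 0) k" for k
  proof -
    have "lk (comult q u) ((m, 1), k) = lk a k" unfolding c1
      using b0 u1 by (simp add: lookup_add lookup_tens)
    moreover have "lk (comult q u) ((m, 1), k) = lk (xy n 0) k" unfolding c2 xy_def nm
      by (simp add: lookup_add lookup_minus lookup_single when_def)
    ultimately show ?thesis by simp
  qed
  hence "a = xy n 0" by (rule poly_mapping_eqI)
  thus ?thesis unfolding a_def nm .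
qed



lemma smult_zero: "smult 0 u = 0"
  by (rule poly_mapping_eqI) simp

lemma star_Autc: "f \<in> Aut_star q \<Longrightarrow> f \<in> Aut_c q"
  by (simp add: Aut_star_def Aut_0_def)

lemma star_d:
  assumes fs: "f \<in> Aut_star q"
  shows "f (xy (n + 1) 0 - xy n 0) = xy (n + 1) 0 - xy n 0"
  using star_fix[OF fs, of n] star_fix[OF fs, of "n + 1"] linear_minus[OF Autc_linear[OF star_Autc[OF fs]]]
  by simp

lemma star_comp:
  assumes f: "f \<in> Aut_star q" and g: "g \<in> Aut_star q"
  shows "f \<circ> g \<in> Aut_star q"
proof -
  have fc: "f \<in> Aut_c q" and gc: "g \<in> Aut_c q" using f g by (simp_all add: star_Autc)
  have L: "k_linear f" by (rule Autc_linear[OF fc])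
  have "\<exists>\<beta>. (f \<circ> g) (xy n 1) = xy n 1 + smult \<beta> (xy (n + 1) 0 - xy n 0)" for n
  proof -
    obtain bf where bf: "f (xy n 1) = xy n 1 + smult bf (xy (n + 1) 0 - xy n 0)"
      using f unfolding Aut_star_def by blast
    obtain bg where bg: "g (xy n 1) = xy n 1 + smult bg (xy (n + 1) 0 - xy n 0)"
      using g unfolding Aut_star_def by blast
    have "(f \<circ> g) (xy n 1) = f (xy n 1) + smult bg (f (xy (n + 1) 0 - xy n 0))"
      using bg by (simp add: lin_add[OF L] lin_smult[OF L])
    also have "\<dots> = xy n 1 + (smult bf (xy (n + 1) 0 - xy n 0) + smult bg (xy (n + 1) 0 - xy n 0))"
      using bf by (simp add: star_d[OF f] add.assoc)
    also have "\<dots> = xy n 1 + smult (bf + bg) (xy (n + 1) 0 - xy n 0)"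
      by (simp add: smult_add_left)
    finally show ?thesis by blast
  qed
  moreover have "(f \<circ> g) (xy 0 0) = xy 0 0" using f g by (simp add: Aut_star_def Aut_0_def)
  ultimately show ?thesis using Autc_comp[OF fc gc] by (simp add: Aut_star_def Aut_0_def)
qed

lemma bij_Inv_f: "bij f \<Longrightarrow> Inv f (f x) = x"
  by (simp add: bij_is_inj inv_into_f_f)
lemma bij_f_Inv: "bij f \<Longrightarrow> f (Inv f x) = x"
  by (simp add: bij_is_surj surj_f_inv_f)

lemma Autc_bij: "f \<in> Aut_c q \<Longrightarrow> bij f" by (simp add: Aut_c_def)

lemma star_inv:
  assumes f: "f \<in> Aut_star q"
  shows "Inv f \<in> Aut_star q"
proof -
  have fc: "f \<in> Aut_c q" using f by (simp add: star_Autc)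
  have L: "k_linear f" by (rule Autc_linear[OF fc])
  have b: "bij f" by (rule Autc_bij[OF fc])
  have "\<exists>\<beta>. Inv f (xy n 1) = xy n 1 + smult \<beta> (xy (n + 1) 0 - xy n 0)" for n
  proof -
    obtain bf where bf: "f (xy n 1) = xy n 1 + smult bf (xy (n + 1) 0 - xy n 0)"
      using f unfolding Aut_star_def by blast
    have "f (xy n 1 + smult (- bf) (xy (n + 1) 0 - xy n 0)) = xy n 1 + (smult bf (xy (n + 1) 0 - xy n 0) + smult (- bf) (xy (n + 1) 0 - xy n 0))"
      using bf by (simp add: lin_add[OF L] lin_smult[OF L] star_d[OF f] add.assoc)
    also have "\<dots> = xy n 1" by (simp add: smult_add_left smult_zero)
    finally have "Inv f (xy n 1) = xy n 1 + smult (- bf) (xy (n + 1) 0 - xy n 0)"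
      using bij_Inv_f[OF b] by metis
    thus ?thesis by blast
  qed
  moreover have "Inv f (xy 0 0) = xy 0 0"
  proof -
    have "f (xy 0 0) = xy 0 0" using f by (simp add: Aut_star_def Aut_0_def)
    thus ?thesis using bij_Inv_f[OF b, of "xy 0 0"] by simp
  qed
  ultimately show ?thesis using Autc_inv[OF fc] by (simp add: Aut_star_def Aut_0_def)
qed

lemma star_id: "id \<in> Aut_star q"
proof -
  have "\<forall>n. \<exists>\<beta>. smult \<beta> (xy (n + 1) 0 - xy n 0) = (0::'a qH)" using smult_zero by blast
  thus ?thesis using Autc_id[of q] by (simp add: Aut_star_def Aut_0_def)
qed

lemma comp_grp_group:
  assumes b: "\<And>f. f \<in> S \<Longrightarrow> bij f" and i: "id \<in> S"
    and c: "\<And>f g. f \<in> S \<Longrightarrow> g \<in> S \<Longrightarrow> f \<circ> g \<in> S"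
    and v: "\<And>f. f \<in> S \<Longrightarrow> Inv f \<in> S"
  shows "group (comp_grp S)"
proof (rule groupI)
  fix x assume x: "x \<in> carrier (comp_grp S)"
  have "Inv x \<circ> x = id" using b[of x] x by (simp add: comp_grp_def fun_eq_iff bij_Inv_f)
  thus "\<exists>y\<in>carrier (comp_grp S). y \<otimes>\<^bsub>comp_grp S\<^esub> x = \<one>\<^bsub>comp_grp S\<^esub>"
    using v[of x] x by (auto simp: comp_grp_def)
qed (auto simp: comp_grp_def c i o_assoc)

lemma comp_grp_inv:
  assumes g: "group (comp_grp S)" and b: "bij f" and f: "f \<in> S" and fi: "Inv f \<in> S"
  shows "inv\<^bsub>comp_grp S\<^esub> f = Inv f"
proof (rule group.inv_equality[OF g])
  show "Inv f \<otimes>\<^bsub>comp_grp S\<^esub> f = \<one>\<^bsub>comp_grp S\<^esub>"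
    using b by (simp add: comp_grp_def fun_eq_iff bij_Inv_f)
qed (use f fi in \<open>simp_all add: comp_grp_def\<close>)

lemma group_G: "group (comp_grp (Aut_star q))"
  by (rule comp_grp_group) (auto intro: star_comp star_inv star_id Autc_bij star_Autc)

lemma G_inv: "f \<in> Aut_star q \<Longrightarrow> inv\<^bsub>comp_grp (Aut_star q)\<^esub> f = Inv f"
  by (rule comp_grp_inv[OF group_G Autc_bij[OF star_Autc] _ star_inv])

lemma Autm_star:
  assumes f: "f \<in> Aut_m q i" and i: "i \<ge> 1"
  shows "f \<in> Aut_star q"
proof -
  have fc: "f \<in> Aut_c q" and fx: "\<And>h. h \<in> Hsum i \<Longrightarrow> f h = h" using f by (auto simp: Aut_m_def)
  have "f (xy n m) = xy n m" if "m \<le> i" for n m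
    using fx[of "xy n m"] that by (simp add: Hsum_iff deg_le_def xy_def)
  hence "f (xy n 1) = xy n 1 + smult 0 (xy (n + 1) 0 - xy n 0)" "f (xy 0 0) = xy 0 0" for n
    using i by (simp_all add: smult_zero)
  thus ?thesis using fc unfolding Aut_star_def Aut_0_def by blast
qed

lemma Autm_mono: "i \<le> j \<Longrightarrow> Aut_m q j \<subseteq> Aut_m q i"
proof
  fix f assume ij: "i \<le> j" and f: "f \<in> Aut_m q j"
  have "f h = h" if "h \<in> Hsum i" for h
  proof -
    have "h \<in> Hsum j" using that ij deg_le_mono by (simp add: Hsum_iff) blast
    thus ?thesis using f by (simp add: Aut_m_def)
  qed
  thus "f \<in> Aut_m q i" using f by (simp add: Aut_m_def)
qed

lemma Autm_subgroup:
  assumes i: "i \<ge> 1"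
  shows "subgroup (Aut_m q i) (comp_grp (Aut_star q))"
proof (rule group.subgroupI[OF group_G])
  show "Aut_m q i \<subseteq> carrier (comp_grp (Aut_star q))"
    using Autm_star[OF _ i] by (auto simp: comp_grp_def)
  show "Aut_m q i \<noteq> {}" using Autc_id[of q] by (auto simp: Aut_m_def)
next
  fix a assume a: "a \<in> Aut_m q i"
  have ac: "a \<in> Aut_c q" using a by (simp add: Aut_m_def)
  have "Inv a h = h" if "h \<in> Hsum i" for h
    using a that bij_Inv_f[OF Autc_bij[OF ac], of h] by (simp add: Aut_m_def)
  thus "inv\<^bsub>comp_grp (Aut_star q)\<^esub> a \<in> Aut_m q i"
    using G_inv[OF Autm_star[OF a i]] Autc_inv[OF ac] by (simp add: Aut_m_def)
next
  fix a b assume a: "a \<in> Aut_m q i" and b: "b \<in> Aut_m q i"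
  thus "a \<otimes>\<^bsub>comp_grp (Aut_star q)\<^esub> b \<in> Aut_m q i"
    by (auto simp: Aut_m_def comp_grp_def Autc_comp)
qed

lemma Autc_Hsum:
  assumes f: "f \<in> Aut_c q" and q: "\<forall>n::nat. n > 0 \<longrightarrow> q ^ n \<noteq> 1" and h: "h \<in> Hsum i"
  shows "f h \<in> Hsum i"
  using coalg_deg[of q f, OF _ q] f h by (simp add: Aut_c_def Hsum_iff)

lemma Autm_normal:
  assumes i: "i \<ge> 1" and q: "\<forall>n::nat. n > 0 \<longrightarrow> q ^ n \<noteq> 1"
  shows "Aut_m q i \<lhd> comp_grp (Aut_star q)"
proof -
  interpret grp: group "comp_grp (Aut_star q)" by (rule group_G)
  show ?thesis unfolding grp.normal_inv_iff
  proof (intro conjI ballI Autm_subgroup[OF i])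
    fix x h assume x: "x \<in> carrier (comp_grp (Aut_star q))" and h: "h \<in> Aut_m q i"
    have xs: "x \<in> Aut_star q" using x by (simp add: comp_grp_def)
    have xc: "x \<in> Aut_c q" by (rule star_Autc[OF xs])
    have hc: "h \<in> Aut_c q" using h by (simp add: Aut_m_def)
    have e: "x \<otimes>\<^bsub>comp_grp (Aut_star q)\<^esub> h \<otimes>\<^bsub>comp_grp (Aut_star q)\<^esub> inv\<^bsub>comp_grp (Aut_star q)\<^esub> x = x \<circ> h \<circ> Inv x"
      using G_inv[OF xs] by (simp add: comp_grp_def)
    have "(x \<circ> h \<circ> Inv x) p = p" if p: "p \<in> Hsum i" for p
    proof -
      have "Inv x p \<in> Hsum i" by (rule Autc_Hsum[OF Autc_inv[OF xc] q p])
      hence "h (Inv x p) = Inv x p" using h by (simp add: Aut_m_def)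
      thus ?thesis using bij_f_Inv[OF Autc_bij[OF xc]] by simp
    qed
    moreover have "x \<circ> h \<circ> Inv x \<in> Aut_c q" by (intro Autc_comp Autc_inv xc hc)
    ultimately show "x \<otimes>\<^bsub>comp_grp (Aut_star q)\<^esub> h \<otimes>\<^bsub>comp_grp (Aut_star q)\<^esub> inv\<^bsub>comp_grp (Aut_star q)\<^esub> x \<in> Aut_m q i"
      unfolding e by (simp add: Aut_m_def)
  qed
qed



lemma canon_rcos:
  assumes G: "group G" and M: "subgroup M G" and N: "N \<lhd> G" and MN: "M \<subseteq> N" and a: "a \<in> carrier G"
  shows "canon_proj G N (M #>\<^bsub>G\<^esub> a) = N #>\<^bsub>G\<^esub> a"
proof -
  interpret G: group G by (rule G)
  interpret N: normal N G by (rule N)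
  have each: "g <#\<^bsub>G\<^esub> N = N #>\<^bsub>G\<^esub> a" if g: "g \<in> M #>\<^bsub>G\<^esub> a" for g
  proof -
    obtain h where h: "h \<in> M" "g = h \<otimes>\<^bsub>G\<^esub> a" using g unfolding r_coset_def by blast
    have hc: "h \<in> carrier G" using h(1) subgroup.mem_carrier[OF M] by blast
    have gc: "g \<in> carrier G" using h hc a by simp
    have "g \<in> N #>\<^bsub>G\<^esub> a" using h MN hc a by (auto intro: G.rcosI simp: N.subset)
    hence "N #>\<^bsub>G\<^esub> a = N #>\<^bsub>G\<^esub> g" by (rule G.repr_independence[OF _ a N.subgroup_axioms])
    also have "\<dots> = g <#\<^bsub>G\<^esub> N" using N.coset_eq gc by blast
    finally show ?thesis by simp
  qed
  have ne: "a \<in> M #>\<^bsub>G\<^esub> a" by (rule G.rcos_self[OF a M])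
  show ?thesis unfolding canon_proj_def using each ne by blast
qed

lemma rcos_of_carrier:
  fixes G (structure)
  assumes "CC \<in> carrier (G Mod M)"
  obtains a where "a \<in> carrier G" "CC = M #>\<^bsub>G\<^esub> a"
  using assms unfolding FactGroup_def RCOSETS_def by auto

lemma canon_epi:
  assumes G: "group G" and M: "M \<lhd> G" and N: "N \<lhd> G" and MN: "M \<subseteq> N"
  shows "canon_proj G N \<in> epi (G Mod M) (G Mod N)"
proof -
  interpret G: group G by (rule G)
  interpret M: normal M G by (rule M)
  interpret N: normal N G by (rule N)
  have cr: "canon_proj G N (M #>\<^bsub>G\<^esub> a) = N #>\<^bsub>G\<^esub> a" if "a \<in> carrier G" for a
    by (rule canon_rcos[OF G M.subgroup_axioms N MN that])
  have hom: "canon_proj G N \<in> hom (G Mod M) (G Mod N)"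
  proof (rule homI)
    fix CC assume "CC \<in> carrier (G Mod M)"
    then obtain a where a: "a \<in> carrier G" "CC = M #>\<^bsub>G\<^esub> a" by (rule rcos_of_carrier)
    show "canon_proj G N CC \<in> carrier (G Mod N)"
      using a cr by (simp add: FactGroup_def G.rcosetsI N.subset)
  next
    fix CC DD assume "CC \<in> carrier (G Mod M)" "DD \<in> carrier (G Mod M)"
    then obtain a b where a: "a \<in> carrier G" "CC = M #>\<^bsub>G\<^esub> a" and b: "b \<in> carrier G" "DD = M #>\<^bsub>G\<^esub> b"
      by (metis rcos_of_carrier)
    show "canon_proj G N (CC \<otimes>\<^bsub>G Mod M\<^esub> DD) = canon_proj G N CC \<otimes>\<^bsub>G Mod N\<^esub> canon_proj G N DD"
      using a b by (simp add: FactGroup_def M.rcos_sum N.rcos_sum cr)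
  qed
  have "canon_proj G N ` carrier (G Mod M) = carrier (G Mod N)"
  proof
    show "canon_proj G N ` carrier (G Mod M) \<subseteq> carrier (G Mod N)"
      using hom by (rule hom_carrier)
    show "carrier (G Mod N) \<subseteq> canon_proj G N ` carrier (G Mod M)"
    proof
      fix DD assume "DD \<in> carrier (G Mod N)"
      then obtain a where a: "a \<in> carrier G" "DD = N #>\<^bsub>G\<^esub> a" by (rule rcos_of_carrier)
      have "M #>\<^bsub>G\<^esub> a \<in> carrier (G Mod M)" using a by (simp add: FactGroup_def G.rcosetsI M.subset)
      moreover have "DD = canon_proj G N (M #>\<^bsub>G\<^esub> a)" using a cr by simp
      ultimately show "DD \<in> canon_proj G N ` carrier (G Mod M)" by blast
    qed
  qed
  thus ?thesis using hom by (simp add: epi_def)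
qed



abbreviation GG :: "'k::field \<Rightarrow> ('k qH \<Rightarrow> 'k qH) monoid" where "GG q \<equiv> comp_grp (Aut_star q)"

lemma rcos_G: "N #>\<^bsub>GG q\<^esub> a = (\<lambda>h. h \<circ> a) ` N"
  by (auto simp: r_coset_def comp_grp_def)

lemma coset_same_fix:
  assumes q: "\<forall>n::nat. n > 0 \<longrightarrow> q ^ n \<noteq> 1" and i: "i \<ge> 1"
    and a: "a \<in> Aut_star q" and b: "b \<in> Aut_star q"
    and e: "Aut_m q i #>\<^bsub>GG q\<^esub> a = Aut_m q i #>\<^bsub>GG q\<^esub> b" and p: "p \<in> Hsum i"
  shows "a p = b p"
proof -
  interpret grp: group "GG q" by (rule group_G)
  have "a \<in> Aut_m q i #>\<^bsub>GG q\<^esub> a"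
    by (rule grp.rcos_self) (use a Autm_subgroup[OF i] in \<open>simp_all add: comp_grp_def\<close>)
  hence "a \<in> (\<lambda>h. h \<circ> b) ` Aut_m q i" using e by (simp add: rcos_G)
  then obtain h where h: "h \<in> Aut_m q i" "a = h \<circ> b" by blast
  have "b p \<in> Hsum i" by (rule Autc_Hsum[OF star_Autc[OF b] q p])
  thus ?thesis using h by (simp add: Aut_m_def)
qed

definition D :: "'k::field qH \<Rightarrow> nat" where
  "D p = Suc (Max (insert 0 (snd ` ks p)))"

lemma D_ge1: "D p \<ge> 1" by (simp add: D_def)

lemma deg_D: "deg_le (D p) p"
  unfolding deg_le_def D_def
proof
  fix a assume "a \<in> ks p"
  hence "snd a \<le> Max (insert 0 (snd ` ks p))" by (intro Max_ge) auto
  thus "snd a \<le> Suc (Max (insert 0 (snd ` ks p)))" by simp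
qed

lemma deg_le_add: assumes "deg_le i u" "deg_le i v" shows "deg_le i (u + v)"
  unfolding deg_le_def
proof
  fix a assume "a \<in> ks (u + v)"
  hence "a \<in> ks u \<union> ks v" by (rule subsetD[OF keys_add])
  thus "snd a \<le> i" using assms unfolding deg_le_def by blast
qed

lemma deg_le_smult: assumes "deg_le i u" shows "deg_le i (smult c u)"
  unfolding deg_le_def
proof
  fix a assume "a \<in> ks (smult c u)"
  hence "a \<in> ks u" by (rule subsetD[OF keys_smult])
  thus "snd a \<le> i" using assms unfolding deg_le_def by blast
qed

lemma glue:
  assumes q: "\<forall>n::nat. n > 0 \<longrightarrow> q ^ n \<noteq> 1"
    and aS: "\<And>i. i \<ge> 1 \<Longrightarrow> a i \<in> Aut_star q"
    and agree: "\<And>i j p. 1 \<le> i \<Longrightarrow> i \<le> j \<Longrightarrow> p \<in> Hsum i \<Longrightarrow> a j p = a i p"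
  defines "\<phi> \<equiv> \<lambda>p. a (D p) p"
  shows "\<phi> \<in> Aut_star q" and "\<And>i p. i \<ge> 1 \<Longrightarrow> deg_le i p \<Longrightarrow> \<phi> p = a i p"
proof -
  have phi_eq: "\<phi> p = a i p" if i: "i \<ge> 1" and d: "deg_le i p" for i p
  proof (cases "i \<le> D p")
    case True thus ?thesis unfolding \<phi>_def using agree[OF i True] d by (simp add: Hsum_iff)
  next
    case False thus ?thesis unfolding \<phi>_def using agree[of "D p" i p, OF D_ge1] deg_D[of p] by (simp add: Hsum_iff)
  qed
  thus "\<And>i p. i \<ge> 1 \<Longrightarrow> deg_le i p \<Longrightarrow> \<phi> p = a i p" by blast
  have aC: "a i \<in> Aut_c q" if "i \<ge> 1" for i using aS[OF that] by (rule star_Autc)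
  have aL: "k_linear (a i)" if "i \<ge> 1" for i using aC[OF that] by (rule Autc_linear)
  have lin: "k_linear \<phi>"
    unfolding k_linear_def
  proof (intro conjI allI)
    fix u v :: "'a qH"
    let ?i = "max (D u) (D v)"
    have i1: "?i \<ge> 1" using D_ge1[of u] by simp
    have du: "deg_le ?i u" and dv: "deg_le ?i v"
      using deg_le_mono[OF deg_D[of u], of ?i] deg_le_mono[OF deg_D[of v], of ?i] by simp_all
    show "\<phi> (u + v) = \<phi> u + \<phi> v"
      using phi_eq[OF i1 deg_le_add[OF du dv]] phi_eq[OF i1 du] phi_eq[OF i1 dv] lin_add[OF aL[OF i1]] by simp
  next
    fix c and u :: "'a qH"
    show "\<phi> (smult c u) = smult c (\<phi> u)"
      using phi_eq[OF D_ge1 deg_le_smult[OF deg_D[of u]]] phi_eq[OF D_ge1 deg_D[of u]] lin_smult[OF aL[OF D_ge1]] by simp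
  qed
  have com: "comult q (\<phi> h) = tmap \<phi> \<phi> (comult q h)" for h
  proof -
    let ?i = "D h"
    have "comult q (\<phi> h) = comult q (a ?i h)" using phi_eq[OF D_ge1 deg_D] by simp
    also have "\<dots> = tmap (a ?i) (a ?i) (comult q h)"
      using aC[OF D_ge1[of h]] by (simp add: Aut_c_def coalg_map_def)
    also have "\<dots> = tmap \<phi> \<phi> (comult q h)"
    proof (rule tmap_cong)
      fix x y assume xy: "(x, y) \<in> ks (comult q h)"
      from keys_comult[OF xy] obtain b where b: "b \<in> ks h"
        and "\<exists>i\<le>snd b. (x, y) = ((fst b, i), (fst b + int i, snd b - i))" by (rule bexE)
      then obtain i where i: "i \<le> snd b" "(x, y) = ((fst b, i), (fst b + int i, snd b - i))" by blast
      have sb: "snd b \<le> ?i" using deg_D[of h] b unfolding deg_le_def by blast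
      have dx: "deg_le ?i (Poly_Mapping.single x (1::'a))" and dy: "deg_le ?i (Poly_Mapping.single y (1::'a))"
        using i sb by (auto simp: deg_le_def)
      show "a ?i (Poly_Mapping.single x 1) = \<phi> (Poly_Mapping.single x 1) \<and> a ?i (Poly_Mapping.single y 1) = \<phi> (Poly_Mapping.single y 1)"
        using phi_eq[OF D_ge1[of h] dx] phi_eq[OF D_ge1[of h] dy] by simp
    qed
    finally show ?thesis .
  qed
  have cou: "counit (\<phi> h) = counit h" for h
    using phi_eq[OF D_ge1 deg_D[of h]] aC[OF D_ge1[of h]] by (simp add: Aut_c_def coalg_map_def)
  have inj: "inj \<phi>"
  proof (rule injI)
    fix u v assume e: "\<phi> u = \<phi> v"
    let ?i = "max (D u) (D v)"
    have i1: "?i \<ge> 1" using D_ge1[of u] by simp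
    have du: "deg_le ?i u" and dv: "deg_le ?i v"
      using deg_le_mono[OF deg_D[of u], of ?i] deg_le_mono[OF deg_D[of v], of ?i] by simp_all
    have "a ?i u = a ?i v" using e phi_eq[OF i1 du] phi_eq[OF i1 dv] by simp
    thus "u = v" using Autc_bij[OF aC[OF i1]] by (simp add: bij_is_inj inj_eq)
  qed
  have surj: "surj \<phi>"
  proof (rule surjI)
    fix v :: "'a qH"
    let ?i = "D v"
    let ?u = "Inv (a ?i) v"
    have "?u \<in> Hsum ?i" using Autc_Hsum[OF Autc_inv[OF aC[OF D_ge1]] q] deg_D[of v] by (simp add: Hsum_iff)
    hence "\<phi> ?u = a ?i ?u" using phi_eq[OF D_ge1] by (simp add: Hsum_iff)
    thus "\<phi> ?u = v" using bij_f_Inv[OF Autc_bij[OF aC[OF D_ge1]]] by simp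
  qed
  have "\<phi> \<in> Aut_c q" using lin com cou inj surj by (simp add: Aut_c_def coalg_map_def bij_def)
  moreover have "\<phi> (xy 0 0) = xy 0 0"
  proof -
    have "\<phi> (xy 0 0) = a 1 (xy 0 0)" by (rule phi_eq) (auto simp: deg_le_def xy_def)
    thus ?thesis using aS[of 1] by (simp add: Aut_star_def Aut_0_def)
  qed
  moreover have "\<exists>\<beta>. \<phi> (xy n 1) = xy n 1 + smult \<beta> (xy (n + 1) 0 - xy n 0)" for n
  proof -
    have "\<phi> (xy n 1) = a 1 (xy n 1)" by (rule phi_eq) (auto simp: deg_le_def xy_def)
    thus ?thesis using aS[of 1] by (simp add: Aut_star_def)
  qed
  ultimately show "\<phi> \<in> Aut_star q" by (simp add: Aut_star_def Aut_0_def)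
qed



lemma lcos_eq:
  assumes q: "\<forall>n::nat. n > 0 \<longrightarrow> q ^ n \<noteq> 1" and i: "i \<ge> 1" and f: "f \<in> Aut_star q"
  shows "f <#\<^bsub>GG q\<^esub> Aut_m q i = Aut_m q i #>\<^bsub>GG q\<^esub> f"
proof -
  interpret N: normal "Aut_m q i" "GG q" by (rule Autm_normal[OF i q])
  show ?thesis using N.coset_eq f by (simp add: comp_grp_def)
qed

lemma rcos_in_carrier:
  assumes q: "\<forall>n::nat. n > 0 \<longrightarrow> q ^ n \<noteq> 1" and i: "i \<ge> 1" and f: "f \<in> Aut_star q"
  shows "Aut_m q i #>\<^bsub>GG q\<^esub> f \<in> carrier (GG q Mod Aut_m q i)"
proof -
  interpret N: normal "Aut_m q i" "GG q" by (rule Autm_normal[OF i q])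
  have "f \<in> carrier (GG q)" using f by (simp add: comp_grp_def)
  thus ?thesis using N.rcosetsI[OF N.subset] by (simp add: FactGroup_def)
qed

theorem theorem3p9:
  fixes q :: "'k::field"
  assumes "q \<noteq> 0" and "\<forall>n::nat. n > 0 \<longrightarrow> q ^ n \<noteq> 1"
  shows "(\<forall>i::nat. i \<ge> 1 \<longrightarrow> Aut_m q i \<lhd> comp_grp (Aut_star q))
    \<and> (\<forall>i j::nat. 1 \<le> i \<and> i \<le> j \<longrightarrow>
          canon_proj (comp_grp (Aut_star q)) (Aut_m q i)
            \<in> epi (comp_grp (Aut_star q) Mod Aut_m q j) (comp_grp (Aut_star q) Mod Aut_m q i))
    \<and> inverse_system {1..} (\<lambda>i. comp_grp (Aut_star q) Mod Aut_m q i)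
          (\<lambda>i j. canon_proj (comp_grp (Aut_star q)) (Aut_m q i))
    \<and> (\<lambda>\<phi>. \<lambda>i\<in>{1::nat..}. \<phi> <#\<^bsub>comp_grp (Aut_star q)\<^esub> Aut_m q i)
        \<in> iso (comp_grp (Aut_star q))
              (inverse_limit {1..} (\<lambda>i. comp_grp (Aut_star q) Mod Aut_m q i)
                 (\<lambda>i j. canon_proj (comp_grp (Aut_star q)) (Aut_m q i)))"
proof -
  note q = assms(2)
  let ?G = "comp_grp (Aut_star q)"
  let ?N = "Aut_m q"
  let ?p = "\<lambda>i j. canon_proj ?G (?N i)"
  let ?L = "inverse_limit {1..} (\<lambda>i. ?G Mod ?N i) ?p"
  let ?\<Phi> = "\<lambda>\<phi>. \<lambda>i\<in>{1::nat..}. \<phi> <#\<^bsub>?G\<^esub> ?N i"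
  have G: "group ?G" by (rule group_G)
  have nor: "\<And>i. i \<ge> 1 \<Longrightarrow> ?N i \<lhd> ?G" using Autm_normal q by blast
  have epi: "\<And>i j. 1 \<le> i \<Longrightarrow> i \<le> j \<Longrightarrow> ?p i j \<in> epi (?G Mod ?N j) (?G Mod ?N i)"
    by (rule canon_epi[OF G nor nor Autm_mono]) auto
  have cr: "canon_proj ?G (?N i) (?N j #>\<^bsub>?G\<^esub> a) = ?N i #>\<^bsub>?G\<^esub> a"
    if "1 \<le> i" "i \<le> j" "a \<in> Aut_star q" for i j a
    using canon_rcos[OF G normal.axioms(1)[OF nor[of j]] nor[of i] Autm_mono[of i j]] that
    by (simp add: comp_grp_def)
  have carrG: "carrier ?G = Aut_star q" by (simp add: comp_grp_def)
  have isys: "inverse_system {1..} (\<lambda>i. ?G Mod ?N i) ?p"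
    unfolding inverse_system_def
  proof (intro conjI ballI impI)
    fix i :: nat assume "i \<in> {1..}"
    thus "group (?G Mod ?N i)" using normal.factorgroup_is_group[OF nor] by simp
  next
    fix i j :: nat assume "i \<in> {1..}" "j \<in> {1..}" "i \<le> j"
    thus "?p i j \<in> hom (?G Mod ?N j) (?G Mod ?N i)" using epi by (simp add: epi_def)
  next
    fix i :: nat and x assume i: "i \<in> {1..}" and x: "x \<in> carrier (?G Mod ?N i)"
    obtain a where a: "a \<in> carrier ?G" "x = ?N i #>\<^bsub>?G\<^esub> a" using x by (rule rcos_of_carrier)
    show "?p i i x = x" using cr[of i i a] a i carrG by simp
  next
    fix i j k :: nat and x assume ijk: "i \<in> {1..}" "j \<in> {1..}" "k \<in> {1..}" "i \<le> j \<and> j \<le> k"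
      and x: "x \<in> carrier (?G Mod ?N k)"
    obtain a where a: "a \<in> carrier ?G" "x = ?N k #>\<^bsub>?G\<^esub> a" using x by (rule rcos_of_carrier)
    show "?p i j (?p j k x) = ?p i k x"
      using cr[of j k a] cr[of i j a] cr[of i k a] a ijk carrG by simp
  qed
  have Phi_car: "?\<Phi> \<phi> \<in> carrier ?L" if f: "\<phi> \<in> Aut_star q" for \<phi>
  proof -
    have "?\<Phi> \<phi> \<in> (\<Pi>\<^sub>E i\<in>{1..}. carrier (?G Mod ?N i))"
      using lcos_eq[OF q _ f] rcos_in_carrier[OF q _ f] by auto
    moreover have "\<forall>i\<in>{1..}. \<forall>j\<in>{1..}. i \<le> j \<longrightarrow> ?p i j (?\<Phi> \<phi> j) = ?\<Phi> \<phi> i"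
      using lcos_eq[OF q _ f] cr f by auto
    ultimately show ?thesis by (simp add: inverse_limit_def)
  qed
  have hom: "?\<Phi> \<in> hom ?G ?L"
  proof (rule homI)
    fix x assume "x \<in> carrier ?G" thus "?\<Phi> x \<in> carrier ?L" using Phi_car carrG by simp
  next
    fix x y assume x: "x \<in> carrier ?G" and y: "y \<in> carrier ?G"
    have xs: "x \<in> Aut_star q" and ys: "y \<in> Aut_star q" using x y carrG by auto
    have "?\<Phi> (x \<otimes>\<^bsub>?G\<^esub> y) i = (?\<Phi> x \<otimes>\<^bsub>?L\<^esub> ?\<Phi> y) i" for i
    proof (cases "i \<ge> 1")
      case True
      interpret N: normal "?N i" ?G by (rule nor[OF True])
      have "?\<Phi> (x \<otimes>\<^bsub>?G\<^esub> y) i = ?N i #>\<^bsub>?G\<^esub> (x \<otimes>\<^bsub>?G\<^esub> y)"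
        using True lcos_eq[OF q True] x y by (simp add: star_comp comp_grp_def)
      also have "\<dots> = (?N i #>\<^bsub>?G\<^esub> x) <#>\<^bsub>?G\<^esub> (?N i #>\<^bsub>?G\<^esub> y)"
        using x y by (simp add: N.rcos_sum)
      also have "\<dots> = (?\<Phi> x \<otimes>\<^bsub>?L\<^esub> ?\<Phi> y) i"
        using True lcos_eq[OF q True xs] lcos_eq[OF q True ys] by (simp add: inverse_limit_def FactGroup_def)
      finally show ?thesis .
    next
      case False thus ?thesis by (simp add: inverse_limit_def)
    qed
    thus "?\<Phi> (x \<otimes>\<^bsub>?G\<^esub> y) = ?\<Phi> x \<otimes>\<^bsub>?L\<^esub> ?\<Phi> y" by (rule ext)
  qed
  have inj: "inj_on ?\<Phi> (carrier ?G)"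
  proof (rule inj_onI)
    fix x y assume x: "x \<in> carrier ?G" and y: "y \<in> carrier ?G" and e: "?\<Phi> x = ?\<Phi> y"
    have xs: "x \<in> Aut_star q" and ys: "y \<in> Aut_star q" using x y carrG by auto
    show "x = y"
    proof (rule ext)
      fix p :: "'k qH"
      let ?i = "D p"
      have "?\<Phi> x ?i = ?\<Phi> y ?i" using e by simp
      hence "?N ?i #>\<^bsub>?G\<^esub> x = ?N ?i #>\<^bsub>?G\<^esub> y"
        using lcos_eq[OF q D_ge1[of p] xs] lcos_eq[OF q D_ge1[of p] ys] D_ge1[of p] by simp
      thus "x p = y p" by (rule coset_same_fix[OF q D_ge1[of p] xs ys]) (simp add: Hsum_iff deg_D)
    qed
  qed
  have sur: "carrier ?L \<subseteq> ?\<Phi> ` carrier ?G"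
  proof
    fix c assume c: "c \<in> carrier ?L"
    have cP: "c \<in> (\<Pi>\<^sub>E i\<in>{1..}. carrier (?G Mod ?N i))"
      and cc: "\<And>i j. 1 \<le> i \<Longrightarrow> i \<le> j \<Longrightarrow> ?p i j (c j) = c i"
      using c by (auto simp: inverse_limit_def)
    have ex: "\<exists>a. a \<in> Aut_star q \<and> c i = ?N i #>\<^bsub>?G\<^esub> a" if i: "i \<ge> 1" for i
    proof -
      have "c i \<in> carrier (?G Mod ?N i)" using cP i by auto
      then obtain a where "a \<in> carrier ?G" "c i = ?N i #>\<^bsub>?G\<^esub> a" by (rule rcos_of_carrier)
      thus ?thesis using carrG by auto
    qed
    define a where "a i = (SOME a. a \<in> Aut_star q \<and> c i = ?N i #>\<^bsub>?G\<^esub> a)" for i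
    have aS: "a i \<in> Aut_star q" and ca: "c i = ?N i #>\<^bsub>?G\<^esub> a i" if "i \<ge> 1" for i
      using someI_ex[OF ex[OF that]] unfolding a_def by auto
    have agree: "a j p = a i p" if ij: "1 \<le> i" "i \<le> j" and p: "p \<in> Hsum i" for i j p
    proof -
      have "c i = ?p i j (c j)" using cc ij by simp
      also have "\<dots> = ?N i #>\<^bsub>?G\<^esub> a j" using ca[of j] cr[OF ij aS[of j]] ij by simp
      finally have e: "?N i #>\<^bsub>?G\<^esub> a j = ?N i #>\<^bsub>?G\<^esub> a i" using ca[OF ij(1)] by simp
      have aj: "a j \<in> Aut_star q" using ij by (simp add: aS)
      have ai: "a i \<in> Aut_star q" using ij by (simp add: aS)
      show ?thesis by (rule coset_same_fix[OF q ij(1) aj ai e p])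
    qed
    define \<phi> where "\<phi> = (\<lambda>p. a (D p) p)"
    have phS: "\<phi> \<in> Aut_star q" and phe: "\<And>i p. i \<ge> 1 \<Longrightarrow> deg_le i p \<Longrightarrow> \<phi> p = a i p"
      using glue[of q a, OF q aS agree] unfolding \<phi>_def by blast+
    have "?\<Phi> \<phi> = c"
    proof (rule ext)
      fix i :: nat
      show "?\<Phi> \<phi> i = c i"
      proof (cases "i \<ge> 1")
        case False
        have "c i = undefined" by (rule PiE_arb[OF cP]) (use False in simp)
        moreover have "?\<Phi> \<phi> i = undefined" using False by simp
        ultimately show ?thesis by simp
      next
        case True
        interpret G: group ?G by (rule G)
        have aC: "a i \<in> Aut_c q" by (rule star_Autc[OF aS[OF True]])
        have phC: "\<phi> \<in> Aut_c q" by (rule star_Autc[OF phS])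
        have m: "\<phi> \<circ> Inv (a i) \<in> ?N i"
        proof -
          have "(\<phi> \<circ> Inv (a i)) p = p" if p: "p \<in> Hsum i" for p
          proof -
            have "Inv (a i) p \<in> Hsum i" by (rule Autc_Hsum[OF Autc_inv[OF aC] q p])
            hence "\<phi> (Inv (a i) p) = a i (Inv (a i) p)" using phe[OF True] by (simp add: Hsum_iff)
            thus ?thesis using bij_f_Inv[OF Autc_bij[OF aC]] by simp
          qed
          thus ?thesis using Autc_comp[OF phC Autc_inv[OF aC]] by (simp add: Aut_m_def)
        qed
        have eqp: "\<phi> = (\<phi> \<circ> Inv (a i)) \<circ> a i"
          using bij_Inv_f[OF Autc_bij[OF aC]] by (simp add: fun_eq_iff)
        have "\<phi> \<in> (\<lambda>h. h \<circ> a i) ` ?N i" by (rule image_eqI[where f="\<lambda>h. h \<circ> a i", OF _ m]) (simp add: eqp[symmetric])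
        hence "\<phi> \<in> ?N i #>\<^bsub>?G\<^esub> a i" by (simp only: rcos_G)
        hence "?N i #>\<^bsub>?G\<^esub> a i = ?N i #>\<^bsub>?G\<^esub> \<phi>"
          by (rule G.repr_independence) (use aS[OF True] normal.axioms(1)[OF nor[OF True]] carrG in simp_all)
        thus ?thesis using True ca[OF True] lcos_eq[OF q True phS] by simp
      qed
    qed
    moreover have "\<phi> \<in> carrier ?G" using phS carrG by simp
    ultimately show "c \<in> ?\<Phi> ` carrier ?G" by (rule image_eqI[OF sym])
  qed
  have "?\<Phi> ` carrier ?G = carrier ?L" by (rule equalityI[OF hom_carrier[OF hom] sur])
  hence iso: "?\<Phi> \<in> iso ?G ?L" using hom inj by (simp add: iso_def bij_betw_def)
  have c1: "\<forall>i::nat. i \<ge> 1 \<longrightarrow> ?N i \<lhd> ?G" using nor by blast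
  have c2: "\<forall>i j::nat. 1 \<le> i \<and> i \<le> j \<longrightarrow> ?p i j \<in> epi (?G Mod ?N j) (?G Mod ?N i)" using epi by blast
  show ?thesis by (rule conjI[OF c1 conjI[OF c2 conjI[OF isys iso]]])
qed

end
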